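(* For every integer $k \geq 1$, let $\mathcal{b}(k)$ denote the greatest common divisor of all the sums $\sum_{i=1}^{k} b_{n+i}$, $n \geq 0$. Then $$\mathcal{b}(k) = \begin{cases} \gcd(P_k, k), & \text{if } k \text{ is even};\\ 2\gcd(Q_k, k), & \text{if } k \text{ is odd}.\end{cases}$$
   Context: The Pell sequence $(P_n)_{n\ge0}$ is defined by $P_0=0$, $P_1=1$, $P_n = 2P_{n-1}+P_{n-2}$. The associated Pell sequence $(Q_n)_{n\ge0}$ is defined by $Q_0=1$, $Q_1=1$, $Q_n=2Q_{n-1}+Q_{n-2}$. The cobalancing sequence $(b_n)_{n\ge0}$ is defined by $b_0=0$, $b_1=0$, $b_n=6b_{n-1}-b_{n-2}+2$. *)

theory Defs
  imports Main
begin

fun pell :: "nat \<Rightarrow> nat" where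
  "pell 0 = 0"
| "pell (Suc 0) = 1"
| "pell (Suc (Suc n)) = 2 * pell (Suc n) + pell n"

fun assoc_pell :: "nat \<Rightarrow> nat" where
  "assoc_pell 0 = 1"
| "assoc_pell (Suc 0) = 1"
| "assoc_pell (Suc (Suc n)) = 2 * assoc_pell (Suc n) + assoc_pell n"

fun cobal :: "nat \<Rightarrow> int" where
  "cobal 0 = 0"
| "cobal (Suc 0) = 0"
| "cobal (Suc (Suc n)) = 6 * cobal (Suc n) - cobal n + 2"

definition cobal_gcd :: "nat \<Rightarrow> int" where
  "cobal_gcd k = Gcd {(\<Sum>i=1..k. cobal (n + i)) | n. True}"

end

theory Submission imports Defs begin

lemma pell_add: "pell (m + n + 1) = pell (m + 1) * pell (n + 1) + pell m * pell n"
proof (induction m arbitrary: n)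
  case 0 then show ?case by simp
next
  case (Suc m)
  have "pell (Suc m + n + 1) = pell (m + (n+1) + 1)" by simp
  also have "\<dots> = pell (m+1) * pell (n+2) + pell m * pell (n+1)" using Suc[of "n+1"] by simp
  also have "\<dots> = pell (m+2) * pell (n+1) + pell (m+1) * pell n"
    by (simp add: numeral_2_eq_2 algebra_simps)
  finally show ?case by simp
qed

lemma assoc_pell_eq: "assoc_pell n + pell n = pell (n + 1)"
  by (induction n rule: assoc_pell.induct) auto

lemma cassini: "int (pell (n+1))^2 - 2 * int (pell (n+1)) * int (pell n) - int (pell n)^2 = (-1)^n"
proof (induction n)
  case 0 then show ?case by simp
next
  case (Suc n)
  have e: "int (pell (Suc n + 1)) = 2 * int (pell (n+1)) + int (pell n)" by simp
  show ?case unfolding e using Suc by (simp add: power2_eq_square algebra_simps)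
qed

lemma cobal_even: "even (cobal n) \<and> even (cobal (n+1))"
  by (induction n) auto

lemma cobal_pell: "2 * cobal (n+1) + 1 = int (pell (2*n+1)) \<and> 2 * cobal (n+2) + 1 = int (pell (2*n+3))"
proof (induction n)
  case 0 then show ?case by (simp add: numeral_eq_Suc)
next
  case (Suc n)
  have c: "cobal (Suc n + 2) = 6 * cobal (n+2) - cobal (n+1) + 2"
    by (simp add: numeral_eq_Suc)
  have p1: "pell (2 * Suc n + 3) = 2 * pell (2*n+4) + pell (2*n+3)"
    by (simp add: numeral_eq_Suc)
  have p2: "pell (2*n+4) = 2 * pell (2*n+3) + pell (2*n+2)"
    by (simp add: numeral_eq_Suc)
  have p3: "pell (2*n+3) = 2 * pell (2*n+2) + pell (2*n+1)"
    by (simp add: numeral_eq_Suc)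
  have "2 * cobal (Suc n + 2) + 1 = int (pell (2 * Suc n + 3))"
    using Suc c p1 p2 p3 by simp
  moreover have "2 * cobal (Suc n + 1) + 1 = int (pell (2 * Suc n + 1))"
    using Suc by (simp add: numeral_eq_Suc)
  ultimately show ?case by simp
qed

lemma cobal_sum: "4 * (\<Sum>i=1..k. cobal i) + 2 * int k = int (pell (2*k))"
proof (induction k)
  case 0 then show ?case by simp
next
  case (Suc k)
  have p: "pell (2 * Suc k) = 2 * pell (2*k+1) + pell (2*k)"
    by (simp add: numeral_eq_Suc)
  have "2 * cobal (k+1) + 1 = int (pell (2*k+1))" using cobal_pell by blast
  then show ?case using Suc p by (simp add: algebra_simps)
qed

lemma pell_double_odd: "int (pell (2*k+1)) = int (pell (k+1))^2 + int (pell k)^2"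
  using pell_add[of k k] by (simp add: power2_eq_square mult_2)

lemma pell_double: "int (pell (2*k)) = 2 * int (pell k) * (int (pell (k+1)) - int (pell k))"
proof (cases k)
  case 0 then show ?thesis by simp
next
  case (Suc j)
  have "2*k = (j+1) + j + 1" using Suc by simp
  then have "pell (2*k) = pell ((j+1) + j + 1)" by metis
  also have "\<dots> = pell (j+2) * pell (j+1) + pell (j+1) * pell j" using pell_add[of "j+1" j] by simp
  finally have a: "pell (2*k) = pell (j+2) * pell (j+1) + pell (j+1) * pell j" .
  have b: "pell (j+2) = 2 * pell (j+1) + pell j" by (simp add: numeral_eq_Suc)
  show ?thesis unfolding a using b Suc by (simp add: algebra_simps)
qed

lemma pell_parity: "even (pell n) = even n \<and> even (pell (n+1)) = even (n+1)"
  by (induction n) auto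


lemma assoc_odd: "odd (assoc_pell n) \<and> odd (assoc_pell (n+1))"
  by (induction n) auto

lemma pell_val: "n \<ge> 1 \<Longrightarrow> \<exists>a u w. odd u \<and> odd w \<and> int (pell n) = 2^a * u \<and> int n = 2^a * (w::int)"
proof (induction n rule: less_induct)
  case (less n)
  show ?case
  proof (cases "even n")
    case False
    then have "odd (int (pell n))" using pell_parity[of n] by simp
    then show ?thesis using False by (intro exI[of _ 0] exI[of _ "int (pell n)"] exI[of _ "int n"]) auto
  next
    case True
    then obtain m where m: "n = 2*m" by blast
    with less.prems have "m \<ge> 1" "m < n" by auto
    with less.IH obtain a u w where h: "odd u" "odd w" "int (pell m) = 2^a * u" "int m = 2^a * (w::int)" by blast
    have y: "int (pell (m+1)) - int (pell m) = int (assoc_pell m)" using assoc_pell_eq[of m] by simp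
    have "int (pell n) = 2 * int (pell m) * int (assoc_pell m)" using pell_double[of m] m y by simp
    also have "\<dots> = 2^(a+1) * (u * int (assoc_pell m))" using h by simp
    finally have e1: "int (pell n) = 2^(a+1) * (u * int (assoc_pell m))" .
    have e2: "int n = 2^(a+1) * w" using h m by simp
    have "odd (u * int (assoc_pell m))" using h assoc_odd[of m] by simp
    then show ?thesis using e1 e2 h by blast
  qed
qed

lemma gcd1: fixes y z a b :: int assumes "a*y + b*z = 1" shows "gcd y z = 1"
proof -
  have "gcd y z dvd a*y + b*z" by simp
  then have "gcd y z dvd 1" using assms by simp
  then show ?thesis by simp
qed

lemma even_up:
  fixes x y k A B g :: int
  assumes "y^2 = 2*x^2 + 1" "2*A = x*y - k" "B = 2*x^2 + x*y" "g dvd A" "g dvd B" "g dvd 2*k"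
  shows "g dvd gcd x k"
proof -
  have "y*B - k*y = 2*x*(x*y-k) + x*(2*k) + y*(x*y-k)"
    using assms(3) by (simp add: power2_eq_square algebra_simps)
  then have "y*B - k*y = 2*x*(2*A) + x*(2*k) + y*(2*A)" using assms(2) by simp
  then have "k*y = y*B - (2*x*(2*A) + x*(2*k) + y*(2*A))" by simp
  then have "g dvd k*y" using assms(4-6) by simp
  moreover have "g dvd k*2" using assms(6) by (simp add: mult.commute)
  ultimately have gg: "g dvd gcd (k*y) (k*2)" by (rule gcd_greatest)
  have "odd (y^2)" using assms(1) by simp
  then have "odd y" by simp
  then have "gcd y 2 = 1" using gcd1[of "1" y "- (y div 2)"] by (simp add: odd_two_times_div_two_succ algebra_simps)
  then have "g dvd \<bar>k\<bar>" using gg gcd_mult_distrib_int[of k y 2] by simp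
  then have gk: "g dvd k" by simp
  have "x*y = 2*A + k" using assms(2) by simp
  moreover have "g dvd 2*A + k" using assms(4) gk by simp
  ultimately have gxy: "g dvd x*y" by simp
  have "x*(2*x) = B - x*y" using assms(3) by (simp add: power2_eq_square)
  then have "g dvd x*(2*x)" using gxy assms(5) by simp
  with gxy have gg2: "g dvd gcd (x*y) (x*(2*x))" by (rule gcd_greatest)
  have "gcd y (2*x) = 1" using gcd1[of y y "-x" "2*x"] assms(1) by (simp add: power2_eq_square algebra_simps)
  then have "gcd (x*y) (x*(2*x)) = \<bar>x\<bar>" by (metis gcd_mult_distrib_int mult_1_right)
  then have "g dvd \<bar>x\<bar>" using gg2 by simp
  then have "g dvd x" by simp
  with gk show ?thesis by simp
qed

lemma odd_up:
  fixes x y k A B g :: int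
  assumes "y^2 = 2*x^2 - 1" "2*A = x*y - k" "B = y^2 + x*y" "g dvd A" "g dvd B" "g dvd 2*k"
  shows "g dvd 2 * gcd y k"
proof -
  have "2*(x*y) = 2*(2*A) + 2*k" using assms(2) by simp
  moreover have "g dvd 2*(2*A) + 2*k" using assms(4,6) by simp
  ultimately have g1: "g dvd 2*(x*y)" by simp
  have "2*y*y = 2*B - 2*(x*y)" using assms(3) by (simp add: power2_eq_square)
  moreover have "g dvd 2*B - 2*(x*y)" using g1 assms(5) by simp
  ultimately have "g dvd 2*y*y" by simp
  moreover have "2*y*x = 2*(x*y)" by simp
  ultimately have gg: "g dvd gcd (2*y*x) (2*y*y)" using g1 by (metis gcd_greatest)
  have "gcd x y = 1" using gcd1[of "2*x" x "-y" y] assms(1) by (simp add: power2_eq_square algebra_simps)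
  then have "gcd (2*y*x) (2*y*y) = \<bar>2*y\<bar>" by (metis gcd_mult_distrib_int mult_1_right)
  then have "g dvd \<bar>2*y\<bar>" using gg by simp
  then have "g dvd 2*y" by simp
  with assms(6) have "g dvd gcd (2*y) (2*k)" by (simp add: gcd_greatest)
  moreover have "gcd (2*y) (2*k) = 2 * gcd y k" using gcd_mult_distrib_int[of 2 y k] by simp
  ultimately show ?thesis by simp
qed

lemma even_down:
  fixes x y k A B u w :: int
  assumes "x = 2^a*u" "k = 2^a*w" "odd u" "odd w" "odd y" "2*A = x*y - k" "B = 2*x^2 + x*y"
  shows "gcd x k dvd A" "gcd x k dvd B" "gcd x k dvd 2*k"
proof -
  show "gcd x k dvd B" using assms(7) by (simp add: power2_eq_square)
  show "gcd x k dvd 2*k" by simp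
  have gd: "gcd x k = 2^a * gcd u w" using assms(1,2) gcd_mult_distrib_int[of "2^a" u w] by simp
  have "odd (gcd u w)" using assms(3) by (metis dvd_trans gcd_dvd1)
  moreover have "gcd u w dvd u*y - w" by (simp add: dvd_diff)
  moreover have "even (u*y - w)" using assms(3-5) by simp
  ultimately have "2 * gcd u w dvd u*y - w"
    by (simp add: divides_mult coprime_commute)
  then obtain t where t: "u*y - w = 2 * gcd u w * t" by blast
  have "2*A = 2^a*(u*y - w)" using assms(1,2,6) by (simp add: algebra_simps)
  then have "A = gcd x k * t" using t gd by (simp add: algebra_simps)
  then show "gcd x k dvd A" by simp
qed

lemma odd_down:
  fixes x y k A B :: int
  assumes "odd y" "even A" "even B" "2*A = x*y - k" "B = y^2 + x*y"
  shows "2 * gcd y k dvd A" "2 * gcd y k dvd B" "2 * gcd y k dvd 2*k"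
proof -
  have o: "odd (gcd y k)" using assms(1) by (metis dvd_trans gcd_dvd1)
  then have c: "coprime 2 (gcd y k)" by (simp add: coprime_commute)  
  have "gcd y k dvd 2*A" using assms(4) by (simp add: dvd_diff)
  then have "gcd y k dvd A" using c by (metis coprime_dvd_mult_right_iff coprime_commute)
  with assms(2) c show "2 * gcd y k dvd A" by (simp add: divides_mult)
  have "gcd y k dvd B" using assms(5) by (simp add: power2_eq_square)
  with assms(3) c show "2 * gcd y k dvd B" by (simp add: divides_mult)
  show "2 * gcd y k dvd 2*k" by simp
qed


definition Sk :: "nat \<Rightarrow> nat \<Rightarrow> int" where "Sk k n = (\<Sum>i=1..k. cobal (n + i))"

lemma Sk_Suc: "Sk (Suc k) n = Sk k n + cobal (n + Suc k)"
  unfolding Sk_def by simp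

lemma Sk_0: "Sk 0 n = 0" unfolding Sk_def by simp

lemma Sk_shift: "Sk k (Suc n) = Sk k n + cobal (n+k+1) - cobal (n+1)"
  by (induction k) (simp_all add: Sk_Suc Sk_0)

lemma Sk_rec: "Sk k (n+2) = 6 * Sk k (n+1) - Sk k n + 2 * int k"
proof (induction k)
  case 0 then show ?case by (simp add: Sk_0)
next
  case (Suc k)
  have "cobal (Suc (Suc (n + Suc k))) = 6 * cobal (Suc (n + Suc k)) - cobal (n + Suc k) + 2"
    by (rule cobal.simps(3))
  moreover have "n + 2 + Suc k = Suc (Suc (n + Suc k))" "n + 1 + Suc k = Suc (n + Suc k)" by simp_all
  ultimately have "cobal (n + 2 + Suc k) = 6 * cobal (n + 1 + Suc k) - cobal (n + Suc k) + 2" by simp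
  then show ?case using Suc by (simp only: Sk_Suc) simp
qed

lemma Sk_all: fixes T :: int
  assumes "T dvd Sk k 0" "T dvd Sk k 1" "T dvd 2 * int k"
  shows "T dvd Sk k n"
proof -
  have "T dvd Sk k n \<and> T dvd Sk k (n+1)"
  proof (induction n)
    case 0 then show ?case using assms by simp
  next
    case (Suc n)
    then have "T dvd 6 * Sk k (n+1) - Sk k n + 2 * int k" using assms(3) by simp
    then show ?case using Suc Sk_rec[of k n] by simp
  qed
  then show ?thesis by simp
qed

theorem theorem28:
  fixes k :: nat
  assumes "k \<ge> 1"
  shows "cobal_gcd k = (if even k then int (gcd (pell k) k)
                        else 2 * int (gcd (assoc_pell k) k))"
proof -
  define x where "x = int (pell k)"
  define z where "z = int (pell (k+1))"
  define y where "y = int (assoc_pell k)"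
  define A where "A = Sk k 0"
  define B where "B = cobal (k+1)"
  define X where "X = {Sk k n | n. True}"
  have cg: "cobal_gcd k = Gcd X" unfolding cobal_gcd_def X_def Sk_def by simp
  have zy: "z = x + y" unfolding x_def y_def z_def using assoc_pell_eq[of k] by simp
  have "A = (\<Sum>i=1..k. cobal i)" unfolding A_def Sk_def by simp
  then have "4*A + 2 * int k = 2*x*(z-x)" using cobal_sum[of k] pell_double[of k] unfolding x_def z_def by simp
  then have hA: "2*A = x*y - int k" using zy by (simp add: algebra_simps)
  have "2*B + 1 = z^2 + x^2" using cobal_pell[of k] pell_double_odd[of k] unfolding B_def x_def z_def by simp
  then have hB: "2*B + 1 = 2*x^2 + 2*x*y + y^2" using zy by (simp add: power2_eq_square algebra_simps)
  have cas: "y^2 - 2*x^2 = (-1)^k" using cassini[of k] zy unfolding x_def z_def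
    by (simp add: power2_eq_square algebra_simps)
  have S1: "Sk k 1 = A + B" using Sk_shift[of k 0] unfolding A_def B_def by (simp add: add.commute)
  have S2: "Sk k 2 = 6*(A+B) - A + 2 * int k" using Sk_rec[of k 0] S1 unfolding A_def by (simp add: numeral_2_eq_2)
  have GA: "Gcd X dvd A" unfolding A_def X_def by (rule Gcd_dvd) blast
  have G1: "Gcd X dvd Sk k 1" unfolding X_def by (rule Gcd_dvd) blast
  have G2: "Gcd X dvd Sk k 2" unfolding X_def by (rule Gcd_dvd) blast
  have GB: "Gcd X dvd B" using GA G1 S1 by (metis add_diff_cancel_left' dvd_diff)
  have "2 * int k = Sk k 2 - 6*(A+B) + A" using S2 by simp
  then have Gk: "Gcd X dvd 2 * int k" using GA G1 G2 S1 by (metis dvd_add dvd_diff dvd_mult)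
  have ge: "Gcd X \<ge> 0" by simp
  show ?thesis
  proof (cases "even k")
    case True
    define T where "T = gcd x (int k)"
    have T: "int (gcd (pell k) k) = T" unfolding T_def x_def by simp
    have y2: "y^2 = 2*x^2 + 1" using cas True by simp
    have hB': "B = 2*x^2 + x*y" using hB y2 by simp
    obtain a u w where uw: "odd u" "odd w" "x = 2^a * u" "int k = 2^a * (w::int)"
      using pell_val[OF assms] unfolding x_def by blast
    have "odd (y^2)" using y2 by simp
    then have oy: "odd y" by simp
    have d: "T dvd A" "T dvd B" "T dvd 2 * int k"
      using even_down[OF uw(3) uw(4) uw(1) uw(2) oy hA hB'] unfolding T_def by auto
    have "T dvd Sk k n" for n using Sk_all[of T k n] d S1 A_def by simp
    then have "T dvd Gcd X" unfolding X_def by (auto intro: Gcd_greatest)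
    moreover have "Gcd X dvd T" using even_up[OF y2 hA hB' GA GB Gk] unfolding T_def .
    ultimately have "Gcd X = T" using ge by (simp add: T_def zdvd_antisym_nonneg)
    then show ?thesis using cg T True by simp
  next
    case False
    define T where "T = 2 * gcd y (int k)"
    have T: "2 * int (gcd (assoc_pell k) k) = T" unfolding T_def y_def by simp
    have y2: "y^2 = 2*x^2 - 1" using cas False by simp
    have hB': "B = y^2 + x*y" using hB y2 by simp
    have "odd (y^2)" using y2 by simp
    then have oy: "odd y" by simp
    have eA: "even A" unfolding A_def Sk_def by (rule dvd_sum) (use cobal_even in blast)
    have eB: "even B" unfolding B_def using cobal_even by blast
    have d: "T dvd A" "T dvd B" "T dvd 2 * int k"
      using odd_down[OF oy eA eB hA hB'] unfolding T_def by auto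
    have "T dvd Sk k n" for n using Sk_all[of T k n] d S1 A_def by simp
    then have "T dvd Gcd X" unfolding X_def by (auto intro: Gcd_greatest)
    moreover have "Gcd X dvd T" using odd_up[OF y2 hA hB' GA GB Gk] unfolding T_def .
    ultimately have "Gcd X = T" using ge by (simp add: T_def zdvd_antisym_nonneg)
    then show ?thesis using cg T False by simp
  qed
qed

end
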